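(* Let $\lambda\in\mathbb R$, $\alpha=1-\lambda$, and let $\mathcal Q_\lambda$ be a $\lambda$-exponential family satisfying Assumption A and Assumption B (with common support $S_\lambda$). Let $\pi\in\mathcal P(\mathcal X,m)$ be $\mathcal Q_\lambda$-compatible. If $\vartheta_*\in\operatorname{dom}\varphi_\lambda$ satisfies $q^{(\alpha)}_{\vartheta_*}(T)=\pi^{(\alpha)}_{|S_\lambda}(T)$, then $\vartheta_*$ is a solution of the problem $\min_{q_\vartheta\in\mathcal Q_\lambda}RD_\alpha(\pi,q_\vartheta)$.
   Context: $\mathcal H$ is a finite-dimensional real Hilbert space; $\mathcal X$ a measurable space with measure $m$; $\mathcal P(\mathcal X,m)$ the probability densities w.r.t. $m$. For a density $p$ and measurable $f$, $p(f)=\int fp\,dm$. Conventions $\log s=-\infty$ for $s\le0$, $\exp(-\infty)=0$. Coupling $c_\lambda(u,v)=\frac1\lambda\log(1+\lambda\langle u,v\rangle)$ ($\lambda\ne0$), $c_0=\langle\cdot,\cdot\rangle$. For measurable $T:\mathcal X\to\mathcal H$: $\varphi_\lambda(\vartheta)=\log\int\exp(c_\lambda(\vartheta,T))dm$, $\operatorname{dom}\varphi_\lambda=\{\varphi_\lambda<+\infty\}$, $q_\vartheta=\exp(c_\lambda(\vartheta,T)-\varphi_\lambda(\vartheta))$, $\mathcal Q_\lambda=\{q_\vartheta:\vartheta\in\operatorname{dom}\varphi_\lambda\}$, support $S_\vartheta=\{x:1+\lambda\langle\vartheta,T(x)\rangle>0\}$. Escort: $p^{(\alpha)}=p^\alpha/\int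 p^\alpha dm$; $p_{|Y}=p\mathbf 1_Y$ and $p^{(\alpha)}_{|Y}$ is the escort of $p_{|Y}$. Rényi divergence: $RD_\alpha(p_1,p_2)=\frac1{\alpha-1}\log\int p_1^\alpha p_2^{1-\alpha}dm$ for $\alpha\ne1$, $RD_1(p_1,p_2)=KL(p_1,p_2)=\int p_1\log(p_1/p_2)dm$, with value $+\infty$ when undefined. Compatibility: $p$ is $q_\vartheta$-compatible if $\int p_{|S_\vartheta}^\alpha dm\in(0,\infty)$ and $\int Tp_{|S_\vartheta}^\alpha dm$ has finite components; $\mathcal Q_\lambda$-compatible if this holds for every $\vartheta\in\operatorname{dom}\varphi_\lambda$. Assumption A: $\alpha>0$ and $\varphi_\lambda$ is proper (never $-\infty$, nonempty domain). Assumption B: there is a nonempty $S_\lambda\subset\mathcal X$ with $S_\vartheta=S_\lambda$ for all $\vartheta\in\operatorname{dom}\varphi_\lambda$, and every $q_\vartheta\in\mathcal Q_\lambda$ is $\mathcal Q_\lambda$-compatible. *)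

theory Defs
  imports "HOL-Analysis.Analysis"
begin

definition eln :: "ennreal \<Rightarrow> ereal" where
  "eln I = (if I = 0 then -\<infinity> else if I = \<infinity> then \<infinity> else ereal (ln (enn2real I)))"

text \<open>exp(c_lambda(theta, T x)), with log s = -\<infinity> for s \<le> 0 and exp(-\<infinity>) = 0.\<close>
definition expc :: "real \<Rightarrow> 'h::real_inner \<Rightarrow> ('x \<Rightarrow> 'h) \<Rightarrow> 'x \<Rightarrow> real" where
  "expc l \<theta> T x =
     (if l = 0 then exp (\<theta> \<bullet> T x)
      else if 1 + l * (\<theta> \<bullet> T x) > 0 then (1 + l * (\<theta> \<bullet> T x)) powr (1 / l) else 0)"

definition partfn :: "'x measure \<Rightarrow> ('x \<Rightarrow> 'h::real_inner) \<Rightarrow> real \<Rightarrow> 'h \<Rightarrow> ennreal" where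
  "partfn m T l \<theta> = (\<integral>\<^sup>+ x. ennreal (expc l \<theta> T x) \<partial>m)"

definition phi :: "'x measure \<Rightarrow> ('x \<Rightarrow> 'h::real_inner) \<Rightarrow> real \<Rightarrow> 'h \<Rightarrow> ereal" where
  "phi m T l \<theta> = eln (partfn m T l \<theta>)"

definition dom_phi :: "'x measure \<Rightarrow> ('x \<Rightarrow> 'h::real_inner) \<Rightarrow> real \<Rightarrow> 'h set" where
  "dom_phi m T l = {\<theta>. phi m T l \<theta> < \<infinity>}"

definition qdens :: "'x measure \<Rightarrow> ('x \<Rightarrow> 'h::real_inner) \<Rightarrow> real \<Rightarrow> 'h \<Rightarrow> 'x \<Rightarrow> real" where
  "qdens m T l \<theta> x = expc l \<theta> T x / enn2real (partfn m T l \<theta>)"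

definition supp :: "'x measure \<Rightarrow> ('x \<Rightarrow> 'h::real_inner) \<Rightarrow> real \<Rightarrow> 'h \<Rightarrow> 'x set" where
  "supp m T l \<theta> = {x \<in> space m. 1 + l * (\<theta> \<bullet> T x) > 0}"

definition is_density :: "'x measure \<Rightarrow> ('x \<Rightarrow> real) \<Rightarrow> bool" where
  "is_density m p \<longleftrightarrow> p \<in> borel_measurable m \<and> (\<forall>x\<in>space m. 0 \<le> p x)
      \<and> (\<integral>\<^sup>+ x. ennreal (p x) \<partial>m) = 1"

definition restr :: "('x \<Rightarrow> real) \<Rightarrow> 'x set \<Rightarrow> 'x \<Rightarrow> real" where
  "restr p Y x = p x * indicator Y x"

definition escort_exp :: "'x measure \<Rightarrow> real \<Rightarrow> ('x \<Rightarrow> real) \<Rightarrow> ('x \<Rightarrow> 'h::euclidean_space) \<Rightarrow> 'h" where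
  "escort_exp m \<alpha> p f = (1 / (\<integral> x. p x powr \<alpha> \<partial>m)) *\<^sub>R (\<integral> x. p x powr \<alpha> *\<^sub>R f x \<partial>m)"

definition compatible :: "'x measure \<Rightarrow> ('x \<Rightarrow> 'h::euclidean_space) \<Rightarrow> real \<Rightarrow> real \<Rightarrow> ('x \<Rightarrow> real) \<Rightarrow> 'h \<Rightarrow> bool" where
  "compatible m T l \<alpha> p \<theta> \<longleftrightarrow>
     (let S = supp m T l \<theta> in
       0 < (\<integral>\<^sup>+ x. ennreal (restr p S x powr \<alpha>) \<partial>m)
       \<and> (\<integral>\<^sup>+ x. ennreal (restr p S x powr \<alpha>) \<partial>m) < \<infinity>
       \<and> integrable m (\<lambda>x. restr p S x powr \<alpha> *\<^sub>R T x))"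

definition Q_compatible :: "'x measure \<Rightarrow> ('x \<Rightarrow> 'h::euclidean_space) \<Rightarrow> real \<Rightarrow> real \<Rightarrow> ('x \<Rightarrow> real) \<Rightarrow> bool" where
  "Q_compatible m T l \<alpha> p \<longleftrightarrow> (\<forall>\<theta>\<in>dom_phi m T l. compatible m T l \<alpha> p \<theta>)"

definition assumptionA :: "'x measure \<Rightarrow> ('x \<Rightarrow> 'h::euclidean_space) \<Rightarrow> real \<Rightarrow> real \<Rightarrow> bool" where
  "assumptionA m T l \<alpha> \<longleftrightarrow> \<alpha> > 0 \<and> (\<forall>\<theta>. phi m T l \<theta> \<noteq> -\<infinity>) \<and> dom_phi m T l \<noteq> {}"

definition assumptionB :: "'x measure \<Rightarrow> ('x \<Rightarrow> 'h::euclidean_space) \<Rightarrow> real \<Rightarrow> real \<Rightarrow> 'x set \<Rightarrow> bool" where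
  "assumptionB m T l \<alpha> S \<longleftrightarrow> S \<noteq> {} \<and> S \<subseteq> space m
     \<and> (\<forall>\<theta>\<in>dom_phi m T l. supp m T l \<theta> = S)
     \<and> (\<forall>\<theta>\<in>dom_phi m T l. Q_compatible m T l \<alpha> (qdens m T l \<theta>))"

text \<open>Integrand p1^alpha p2^(1-alpha) in [0,\<infinity>], with the conventions 0^a = 0 (a>0),
  0^a = \<infinity> (a<0), 0 * \<infinity> = 0.\<close>
definition rd_integrand :: "real \<Rightarrow> real \<Rightarrow> real \<Rightarrow> ennreal" where
  "rd_integrand \<alpha> a b =
     (if a = 0 then 0
      else if b = 0 then (if \<alpha> < 1 then 0 else \<infinity>)
      else ennreal (a powr \<alpha> * b powr (1 - \<alpha>)))"

definition KL_div :: "'x measure \<Rightarrow> ('x \<Rightarrow> real) \<Rightarrow> ('x \<Rightarrow> real) \<Rightarrow> ereal" where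
  "KL_div m p1 p2 =
     (if (AE x in m. p1 x > 0 \<longrightarrow> p2 x > 0) \<and> integrable m (\<lambda>x. p1 x * ln (p1 x / p2 x))
      then ereal (\<integral> x. p1 x * ln (p1 x / p2 x) \<partial>m) else \<infinity>)"

definition renyi_div :: "'x measure \<Rightarrow> real \<Rightarrow> ('x \<Rightarrow> real) \<Rightarrow> ('x \<Rightarrow> real) \<Rightarrow> ereal" where
  "renyi_div m \<alpha> p1 p2 =
     (if \<alpha> = 1 then KL_div m p1 p2
      else ereal (1 / (\<alpha> - 1)) * eln (\<integral>\<^sup>+ x. rd_integrand \<alpha> (p1 x) (p2 x) \<partial>m))"

end

theory Submission
  imports Defs
begin

lemma bern_powr:
  fixes p t :: real
  assumes t: "t > 0" and p: "p \<ge> 1 \<or> p \<le> 0"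
  shows "1 + p * (t - 1) \<le> t powr p"
proof -
  have "(\<lambda>x. p * x powr (p - 1)) 1 * (t - 1) \<le> t powr p - 1 powr p"
  proof (rule f''_imp_f'[where C="{0<..}" and f="\<lambda>x. x powr p" and f'="\<lambda>x. p * x powr (p - 1)" and f''="\<lambda>x. p * ((p - 1) * x powr (p - 2))"])
    show "convex {0::real<..}" by simp
    show "DERIV (\<lambda>x. x powr p) x :> p * x powr (p - 1)" if "x \<in> {0<..}" for x
      using that by (auto intro!: derivative_eq_intros)
    show "DERIV (\<lambda>x. p * x powr (p - 1)) x :> p * ((p - 1) * x powr (p - 2))" if "x \<in> {0<..}" for x
      using that by (auto intro!: derivative_eq_intros simp: algebra_simps)
    show "0 \<le> p * ((p - 1) * x powr (p - 2))" if "x \<in> {0<..}" for x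
      using p proof
      assume "1 \<le> p" then show ?thesis by simp
    next
      assume "p \<le> 0" then show ?thesis by (intro mult_nonpos_nonpos) (auto intro!: mult_nonpos_nonneg)
    qed
  qed (use t in auto)
  then show ?thesis by simp
qed

lemma tangent_powr:
  fixes a b c p :: real
  assumes a: "a > 0" and b: "b > 0" and c: "c > 0" and p: "p \<ge> 1 \<or> p \<le> 0"
  shows "c powr p * a powr p + p * c powr (p - 1) * (a powr (p - 1) * b - c * a powr p) \<le> b powr p"
proof -
  have ca: "c * a > 0" using a c by simp
  have "1 + p * (b / (c * a) - 1) \<le> (b / (c * a)) powr p"
    using bern_powr[of "b / (c*a)" p] a b c p by simp
  then have "(c*a) powr p * (1 + p * (b / (c * a) - 1)) \<le> (c*a) powr p * (b / (c * a)) powr p"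
    by (rule mult_left_mono) simp
  also have "\<dots> = b powr p" using ca b a c by (simp add: powr_divide powr_mult)
  also have "(c*a) powr p * (1 + p * (b / (c * a) - 1)) = c powr p * a powr p + p * c powr (p - 1) * (a powr (p - 1) * b - c * a powr p)"
    using a c by (simp add: powr_mult powr_diff field_simps)
  finally show ?thesis .
qed

lemma expc_meas[measurable]:
  fixes T :: "'x \<Rightarrow> 'h::euclidean_space"
  assumes [measurable]: "T \<in> borel_measurable m"
  shows "expc l \<theta> T \<in> borel_measurable m"
  unfolding expc_def[abs_def] by (cases "l = 0") simp_all

lemma supp_sets[measurable]:
  fixes T :: "'x \<Rightarrow> 'h::euclidean_space"
  assumes [measurable]: "T \<in> borel_measurable m"
  shows "supp m T l \<theta> \<in> sets m"
  unfolding supp_def by measurable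

lemma expc_nonneg: "0 \<le> expc l \<theta> T x"
  unfolding expc_def by auto

lemma eln_mono: "I \<le> J \<Longrightarrow> eln I \<le> eln J"
  unfolding eln_def
  by (cases I; cases J) (auto simp: enn2real_ennreal ennreal_le_iff2 ennreal_eq_0_iff top_unique)

lemma eln_ennreal: "x > 0 \<Longrightarrow> eln (ennreal x) = ereal (ln x)"
  unfolding eln_def by auto

lemma ereal_neg_mult_anti: "c < 0 \<Longrightarrow> x \<le> y \<Longrightarrow> ereal c * y \<le> ereal c * (x::ereal)"
  by (cases x; cases y) (auto simp: mult_left_mono_neg)

lemma ereal_pos_mult_mono: "c > 0 \<Longrightarrow> x \<le> y \<Longrightarrow> ereal c * x \<le> ereal c * (y::ereal)"
  by (cases x; cases y) (auto simp: mult_left_mono)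

lemma partfn_facts:
  assumes [measurable]: "T \<in> borel_measurable m"
    and A: "assumptionA m T l \<alpha>" and th: "\<theta> \<in> dom_phi m T l"
  shows "integrable m (expc l \<theta> T)" "partfn m T l \<theta> = ennreal (\<integral>x. expc l \<theta> T x \<partial>m)"
    "(\<integral>x. expc l \<theta> T x \<partial>m) > 0"
proof -
  have ne0: "partfn m T l \<theta> \<noteq> 0" using A unfolding assumptionA_def phi_def eln_def
    by (metis ereal_uminus_uminus uminus_ereal.simps(3))
  have fin: "partfn m T l \<theta> < \<infinity>" using th unfolding dom_phi_def phi_def eln_def
    by (auto simp: top.not_eq_extremum split: if_splits)
  show int: "integrable m (expc l \<theta> T)"
    by (rule integrableI_nonneg) (use fin in \<open>auto simp: expc_nonneg partfn_def\<close>)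
  show eq: "partfn m T l \<theta> = ennreal (\<integral>x. expc l \<theta> T x \<partial>m)"
    unfolding partfn_def by (rule nn_integral_eq_integral[OF int]) (simp add: expc_nonneg)
  show "(\<integral>x. expc l \<theta> T x \<partial>m) > 0"
    using ne0 eq integral_nonneg_AE[of "expc l \<theta> T" m] expc_nonneg
    by (metis ennreal_0 AE_I2 less_eq_real_def)
qed

lemma lin_int:
  fixes f :: "'x \<Rightarrow> real" and g :: "'x \<Rightarrow> 'h::euclidean_space"
  assumes f: "integrable m f" and g: "integrable m g"
  shows "(\<integral>x. f x + l * (t \<bullet> g x) \<partial>m) = integral\<^sup>L m f + l * (t \<bullet> integral\<^sup>L m g)"
proof -
  have "(\<integral>x. f x + l * (t \<bullet> g x) \<partial>m) = integral\<^sup>L m f + (\<integral>x. l * (t \<bullet> g x) \<partial>m)"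
    by (rule Bochner_Integration.integral_add) (use f g in auto)
  also have "(\<integral>x. l * (t \<bullet> g x) \<partial>m) = l * (\<integral>x. t \<bullet> g x \<partial>m)"
    by (rule integral_mult_right_zero)
  also have "(\<integral>x. t \<bullet> g x \<partial>m) = t \<bullet> integral\<^sup>L m g"
    by (rule integral_inner_right) (use g in auto)
  finally show ?thesis .
qed

lemma frac1: "(a::real) > 0 \<Longrightarrow> z > 0 \<Longrightarrow> X > 0 \<Longrightarrow> Y > 0 \<Longrightarrow> (a / z) * Y \<le> X \<Longrightarrow> a / X \<le> z / Y"
  by (simp add: field_simps)
lemma frac2: "(a::real) > 0 \<Longrightarrow> z > 0 \<Longrightarrow> X > 0 \<Longrightarrow> Y > 0 \<Longrightarrow> X \<le> (a / z) * Y  \<Longrightarrow> z / Y \<le> a / X"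
  by (simp add: field_simps)
lemma frac3: "(K::real) > 0 \<Longrightarrow> a / X \<le> z / Y \<Longrightarrow> K * a / X \<le> K * z / Y"
  by (metis mult_left_mono less_imp_le times_divide_eq_right)
lemma enn_add_mono: "(x::real) \<le> y \<Longrightarrow> ennreal x + G \<le> ennreal y + G"
  by (simp add: add_right_mono ennreal_leI)

lemma main_ne0:
  fixes m :: "'x measure" and T :: "'x \<Rightarrow> 'h::euclidean_space"
    and l \<alpha> :: real and S :: "'x set" and \<pi> :: "'x \<Rightarrow> real" and \<theta>s :: 'h
  assumes T_meas: "T \<in> borel_measurable m"
    and alpha_def: "\<alpha> = 1 - l"
    and A: "assumptionA m T l \<alpha>"
    and B: "assumptionB m T l \<alpha> S"
    and pi_dens: "is_density m \<pi>"
    and pi_compat: "Q_compatible m T l \<alpha> \<pi>"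
    and ths_dom: "\<theta>s \<in> dom_phi m T l"
    and moment: "escort_exp m \<alpha> (qdens m T l \<theta>s) T = escort_exp m \<alpha> (restr \<pi> S) T"
    and l0: "l \<noteq> 0" and th: "\<theta> \<in> dom_phi m T l"
  shows "renyi_div m \<alpha> \<pi> (qdens m T l \<theta>s) \<le> renyi_div m \<alpha> \<pi> (qdens m T l \<theta>)"
proof -
  note [measurable] = T_meas
  have pi_meas[measurable]: "\<pi> \<in> borel_measurable m" and pi_nn: "\<And>x. x \<in> space m \<Longrightarrow> 0 \<le> \<pi> x"
    using pi_dens by (auto simp: is_density_def)
  have apos: "\<alpha> > 0" using A by (simp add: assumptionA_def)
  define p where "p = 1 / l"
  have pa: "p * \<alpha> = p - 1" "p * l = 1" using l0 by (auto simp: p_def alpha_def field_simps)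
  define u where "u t x = 1 + l * (t \<bullet> T x)" for t x
  have u_meas[measurable]: "u t \<in> borel_measurable m" for t unfolding u_def by measurable
  have suppS: "\<And>t. t \<in> dom_phi m T l \<Longrightarrow> supp m T l t = S" using B by (simp add: assumptionB_def)
  have Ssets[measurable]: "S \<in> sets m" using supp_sets[OF T_meas] suppS[OF ths_dom] by metis
  have S_iff: "x \<in> S \<longleftrightarrow> u t x > 0" if "t \<in> dom_phi m T l" "x \<in> space m" for t x
    using suppS[OF that(1)] that(2) unfolding supp_def u_def by auto
  have e_eq: "expc l t T x = (if x \<in> S then u t x powr p else 0)" if "t \<in> dom_phi m T l" "x \<in> space m" for t x
    unfolding expc_def using l0 S_iff[OF that] by (auto simp: u_def p_def)
  define Z where "Z t = (\<integral>x. expc l t T x \<partial>m)" for t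
  have Zpos: "Z t > 0" and Zint: "integrable m (expc l t T)" and Zpf: "partfn m T l t = ennreal (Z t)"
    if "t \<in> dom_phi m T l" for t
    using partfn_facts[OF T_meas A that] by (auto simp: Z_def)
  have q_eq: "qdens m T l t x = (if x \<in> S then u t x powr p / Z t else 0)"
    if "t \<in> dom_phi m T l" "x \<in> space m" for t x
    using Zpos[OF that(1)] by (simp add: qdens_def Zpf[OF that(1)] e_eq[OF that])
  define w where "w x = (if x \<in> S then u \<theta>s x powr (p - 1) else 0)" for x
  have w_meas[measurable]: "w \<in> borel_measurable m" unfolding w_def by measurable
  have w_nn: "0 \<le> w x" for x unfolding w_def by auto
  define c0 where "c0 = Z \<theta>s powr \<alpha>"
  have c0pos: "c0 > 0" using Zpos[OF ths_dom] by (simp add: c0_def)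
  have qpow: "qdens m T l \<theta>s x powr \<alpha> = w x / c0" if "x \<in> space m" for x
  proof (cases "x \<in> S")
    case True
    then have "u \<theta>s x > 0" using S_iff[OF ths_dom that] by simp
    then show ?thesis using True Zpos[OF ths_dom] q_eq[OF ths_dom that] apos
      by (simp add: w_def c0_def powr_divide powr_powr pa)
  next
    case False
    then show ?thesis using q_eq[OF ths_dom that] apos by (simp add: w_def)
  qed
  have rqpow: "restr (qdens m T l \<theta>s) S x powr \<alpha> = w x / c0" if "x \<in> space m" for x
    using qpow[OF that] by (cases "x \<in> S") (auto simp: restr_def w_def)
  have cq: "compatible m T l \<alpha> (qdens m T l \<theta>s) \<theta>s"
    using B ths_dom by (simp add: assumptionB_def Q_compatible_def)
  then have cq1: "0 < (\<integral>\<^sup>+ x. ennreal (w x / c0) \<partial>m)" and cq2: "(\<integral>\<^sup>+ x. ennreal (w x / c0) \<partial>m) < \<infinity>"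
    and cq3: "integrable m (\<lambda>x. (w x / c0) *\<^sub>R T x)"
  proof -
    have "0 < (\<integral>\<^sup>+ x. ennreal (restr (qdens m T l \<theta>s) S x powr \<alpha>) \<partial>m)"
      "(\<integral>\<^sup>+ x. ennreal (restr (qdens m T l \<theta>s) S x powr \<alpha>) \<partial>m) < \<infinity>"
      and i: "integrable m (\<lambda>x. restr (qdens m T l \<theta>s) S x powr \<alpha> *\<^sub>R T x)"
      using cq unfolding compatible_def Let_def suppS[OF ths_dom] by auto
    moreover have "(\<integral>\<^sup>+ x. ennreal (restr (qdens m T l \<theta>s) S x powr \<alpha>) \<partial>m) = (\<integral>\<^sup>+ x. ennreal (w x / c0) \<partial>m)"
      by (rule nn_integral_cong) (simp add: rqpow)
    moreover have "integrable m (\<lambda>x. restr (qdens m T l \<theta>s) S x powr \<alpha> *\<^sub>R T x) = integrable m (\<lambda>x. (w x / c0) *\<^sub>R T x)"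
      by (rule Bochner_Integration.integrable_cong) (simp_all only: rqpow)
    ultimately show "0 < (\<integral>\<^sup>+ x. ennreal (w x / c0) \<partial>m)" "(\<integral>\<^sup>+ x. ennreal (w x / c0) \<partial>m) < \<infinity>"
      "integrable m (\<lambda>x. (w x / c0) *\<^sub>R T x)" by auto
  qed
  have wc_int: "integrable m (\<lambda>x. w x / c0)"
    by (rule integrableI_nonneg) (use cq2 w_nn c0pos in auto)
  define Iw where "Iw = (\<integral>x. w x \<partial>m)"
  define Mw where "Mw = (\<integral>x. w x *\<^sub>R T x \<partial>m)"
  have Iwpos: "Iw > 0"
  proof -
    have e1: "(\<integral>\<^sup>+ x. ennreal (w x / c0) \<partial>m) = ennreal (\<integral>x. w x / c0 \<partial>m)"
      by (rule nn_integral_eq_integral[OF wc_int]) (use w_nn c0pos in auto)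
    have "0 < ennreal (\<integral>x. w x / c0 \<partial>m)" using cq1 unfolding e1 .
    then have "(\<integral>x. w x / c0 \<partial>m) > 0" by (simp add: ennreal_less_zero_iff)
    then have "Iw / c0 > 0" unfolding Iw_def by simp
    then show ?thesis using c0pos by (simp add: zero_less_divide_iff)
  qed
  have w_int: "integrable m w"
  proof -
    have "integrable m (\<lambda>x. c0 * (w x / c0))" by (rule integrable_mult_right[OF wc_int])
    moreover have "\<And>x. c0 * (w x / c0) = w x" using c0pos by simp
    ultimately show ?thesis by simp
  qed
  have wT_int: "integrable m (\<lambda>x. w x *\<^sub>R T x)"
  proof -
    have "integrable m (\<lambda>x. c0 *\<^sub>R ((w x / c0) *\<^sub>R T x))" by (rule integrable_scaleR_right[OF cq3])
    moreover have "(\<lambda>x. c0 *\<^sub>R ((w x / c0) *\<^sub>R T x)) = (\<lambda>x. w x *\<^sub>R T x)" using c0pos by simp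
    ultimately show ?thesis by metis
  qed
  have esc_q: "escort_exp m \<alpha> (qdens m T l \<theta>s) T = (1 / Iw) *\<^sub>R Mw"
  proof -
    have "(\<integral>x. qdens m T l \<theta>s x powr \<alpha> \<partial>m) = (\<integral>x. w x / c0 \<partial>m)"
      by (rule Bochner_Integration.integral_cong) (simp_all add: qpow)
    also have "\<dots> = Iw / c0" by (simp add: Iw_def)
    finally have i1: "(\<integral>x. qdens m T l \<theta>s x powr \<alpha> \<partial>m) = Iw / c0" .
    have "(\<integral>x. qdens m T l \<theta>s x powr \<alpha> *\<^sub>R T x \<partial>m) = (\<integral>x. (1 / c0) *\<^sub>R (w x *\<^sub>R T x) \<partial>m)"
      by (rule Bochner_Integration.integral_cong) (simp_all add: qpow)
    also have "\<dots> = (1 / c0) *\<^sub>R Mw" unfolding Mw_def by (rule integral_scaleR_right)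
    finally have i2: "(\<integral>x. qdens m T l \<theta>s x powr \<alpha> *\<^sub>R T x \<partial>m) = (1 / c0) *\<^sub>R Mw" .
    show ?thesis unfolding escort_exp_def i1 i2 using c0pos by simp
  qed
  define rp where "rp x = restr \<pi> S x powr \<alpha>" for x
  have rp_meas[measurable]: "rp \<in> borel_measurable m" unfolding rp_def restr_def by measurable
  have rp_nn: "0 \<le> rp x" for x by (simp add: rp_def)
  have rp0: "rp x = 0" if "x \<notin> S" for x using that apos by (simp add: rp_def restr_def)
  have cp: "compatible m T l \<alpha> \<pi> \<theta>s" using pi_compat ths_dom by (simp add: Q_compatible_def)
  then have cp1: "0 < (\<integral>\<^sup>+ x. ennreal (rp x) \<partial>m)" and cp2: "(\<integral>\<^sup>+ x. ennreal (rp x) \<partial>m) < \<infinity>"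
    and rpT_int: "integrable m (\<lambda>x. rp x *\<^sub>R T x)"
    unfolding compatible_def Let_def suppS[OF ths_dom] rp_def by auto
  have rp_int: "integrable m rp"
    by (rule integrableI_nonneg) (use cp2 rp_nn in auto)
  define Ip where "Ip = (\<integral>x. rp x \<partial>m)"
  define Mp where "Mp = (\<integral>x. rp x *\<^sub>R T x \<partial>m)"
  have Ippos: "Ip > 0"
  proof -
    have e1: "(\<integral>\<^sup>+ x. ennreal (rp x) \<partial>m) = ennreal Ip"
      unfolding Ip_def by (rule nn_integral_eq_integral[OF rp_int]) (use rp_nn in auto)
    show ?thesis using cp1 unfolding e1 by (simp add: ennreal_less_zero_iff)
  qed
  have esc_p: "escort_exp m \<alpha> (restr \<pi> S) T = (1 / Ip) *\<^sub>R Mp"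
    unfolding escort_exp_def Ip_def Mp_def rp_def ..
  have Mp_eq: "Mp = (Ip / Iw) *\<^sub>R Mw"
  proof -
    have "(1 / Iw) *\<^sub>R Mw = (1 / Ip) *\<^sub>R Mp" using moment esc_q esc_p by simp
    then have "Ip *\<^sub>R ((1 / Iw) *\<^sub>R Mw) = Ip *\<^sub>R ((1 / Ip) *\<^sub>R Mp)" by simp
    then show ?thesis using Ippos by simp
  qed
  define A where "A t = (\<integral>x. w x * u t x \<partial>m)" for t
  have wu_eq: "w x * u t x = w x + l * (t \<bullet> (w x *\<^sub>R T x))" for t x
    by (simp add: u_def algebra_simps)
  have wu_int: "integrable m (\<lambda>x. w x * u t x)" for t
    unfolding wu_eq using w_int wT_int by (intro Bochner_Integration.integrable_add integrable_mult_right integrable_inner_right)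
  have A_eq: "A t = Iw + l * (t \<bullet> Mw)" for t
    unfolding A_def wu_eq Iw_def Mw_def using w_int wT_int by (rule lin_int)
  have rpu_eq: "rp x * u t x = rp x + l * (t \<bullet> (rp x *\<^sub>R T x))" for t x
    by (simp add: u_def algebra_simps)
  have rpu_int: "integrable m (\<lambda>x. rp x * u t x)" for t
    unfolding rpu_eq using rp_int rpT_int by (intro Bochner_Integration.integrable_add integrable_mult_right integrable_inner_right)
  have rpu_A: "(\<integral>x. rp x * u t x \<partial>m) = (Ip / Iw) * A t" for t
  proof -
    have "(\<integral>x. rp x * u t x \<partial>m) = Ip + l * (t \<bullet> Mp)"
      unfolding rpu_eq Ip_def Mp_def using rp_int rpT_int by (rule lin_int)
    also have "\<dots> = (Ip / Iw) * A t" unfolding A_eq Mp_eq using Iwpos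
      by (simp add: field_simps)
    finally show ?thesis .
  qed
  have As: "A \<theta>s = Z \<theta>s"
    unfolding A_def Z_def
  proof (rule Bochner_Integration.integral_cong)
    fix x assume x: "x \<in> space m"
    show "w x * u \<theta>s x = expc l \<theta>s T x"
    proof (cases "x \<in> S")
      case True
      then have "u \<theta>s x > 0" using S_iff[OF ths_dom x] by simp
      then show ?thesis using True e_eq[OF ths_dom x]
        by (simp add: w_def powr_diff)
    qed (simp add: w_def e_eq[OF ths_dom x])
  qed simp
  have Apos: "A t > 0" if t: "t \<in> dom_phi m T l" for t
  proof -
    have nn: "0 \<le> w x * u t x" if "x \<in> space m" for x
      using S_iff[OF t that] w_nn by (cases "x \<in> S") (auto simp: w_def)
    have "A t \<ge> 0" unfolding A_def using nn by (simp add: integral_nonneg)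
    moreover have "A t \<noteq> 0"
    proof
      assume "A t = 0"
      then have "AE x in m. w x * u t x = 0"
        using integral_nonneg_eq_0_iff_AE[OF wu_int[of t]] nn unfolding A_def by auto
      then have "AE x in m. expc l \<theta>s T x = 0"
      proof (rule AE_mp[OF _ AE_I2], intro impI)
        fix x assume x: "x \<in> space m" and z: "w x * u t x = 0"
        show "expc l \<theta>s T x = 0"
        proof (cases "x \<in> S")
          case True
          then show ?thesis using z S_iff[OF t x] S_iff[OF ths_dom x] by (simp add: w_def)
        qed (simp add: e_eq[OF ths_dom x])
      qed
      then have "Z \<theta>s = 0" unfolding Z_def by (simp add: integral_eq_zero_AE)
      then show False using Zpos[OF ths_dom] by simp
    qed
    ultimately show ?thesis by simp
  qed
  have pcond: "p \<ge> 1 \<or> p \<le> 0"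
  proof (cases "l > 0")
    case True
    then have "l \<le> 1" using apos alpha_def by simp
    then show ?thesis using True by (simp add: p_def)
  next
    case False
    then show ?thesis using l0 by (simp add: p_def divide_nonpos_neg)
  qed
  have tang: "(A t / Z \<theta>s) powr p * Z \<theta>s \<le> Z t" if t: "t \<in> dom_phi m T l" for t
  proof -
    define c where "c = A t / Z \<theta>s"
    have cpos: "c > 0" using Apos[OF t] Zpos[OF ths_dom] by (simp add: c_def)
    have pw: "c powr p * expc l \<theta>s T x + p * c powr (p - 1) * (w x * u t x - c * expc l \<theta>s T x) \<le> expc l t T x"
      if x: "x \<in> space m" for x
    proof (cases "x \<in> S")
      case True
      have a: "u \<theta>s x > 0" using True S_iff[OF ths_dom x] by simp
      have b: "u t x > 0" using True S_iff[OF t x] by simp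
      show ?thesis using tangent_powr[OF a b cpos pcond] True e_eq[OF ths_dom x] e_eq[OF t x]
        by (simp add: w_def algebra_simps)
    qed (simp add: w_def e_eq[OF ths_dom x] e_eq[OF t x])
    have "(\<integral>x. c powr p * expc l \<theta>s T x + p * c powr (p - 1) * (w x * u t x - c * expc l \<theta>s T x) \<partial>m) \<le> Z t"
      unfolding Z_def
      by (rule integral_mono[OF _ Zint[OF t] pw]) (use Zint[OF ths_dom] wu_int in auto)
    also have "(\<integral>x. c powr p * expc l \<theta>s T x + p * c powr (p - 1) * (w x * u t x - c * expc l \<theta>s T x) \<partial>m)
       = c powr p * Z \<theta>s + p * c powr (p - 1) * (A t - c * Z \<theta>s)"
      using Zint[OF ths_dom] wu_int[of t] by (simp add: A_def Z_def)
    also have "A t - c * Z \<theta>s = 0" using Zpos[OF ths_dom] by (simp add: c_def)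
    finally show ?thesis by (simp add: c_def)
  qed
  define g :: "'x \<Rightarrow> ennreal" where "g x = (if x \<in> S \<or> \<pi> x = 0 then 0 else if \<alpha> < 1 then 0 else \<infinity>)" for x
  have g_meas[measurable]: "g \<in> borel_measurable m" unfolding g_def by measurable
  define G where "G = (\<integral>\<^sup>+ x. g x \<partial>m)"
  define J where "J t = (Ip / Iw) * A t / Z t powr l" for t
  have F_eq: "(\<integral>\<^sup>+ x. rd_integrand \<alpha> (\<pi> x) (qdens m T l t x) \<partial>m) = ennreal (J t) + G"
    if t: "t \<in> dom_phi m T l" for t
  proof -
    have Zt: "Z t > 0" using Zpos[OF t] .
    have pw: "rd_integrand \<alpha> (\<pi> x) (qdens m T l t x) = ennreal (rp x * u t x / Z t powr l) + g x"
      if x: "x \<in> space m" for x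
    proof (cases "x \<in> S")
      case True
      have ut: "u t x > 0" using True S_iff[OF t x] by simp
      have q: "qdens m T l t x = u t x powr p / Z t" using q_eq[OF t x] True by simp
      have qpos: "qdens m T l t x > 0" using q ut Zt by simp
      have ql: "qdens m T l t x powr (1 - \<alpha>) = u t x / Z t powr l"
        using ut Zt unfolding q alpha_def by (simp add: powr_divide powr_powr pa)
      show ?thesis
      proof (cases "\<pi> x = 0")
        case True
        then show ?thesis using \<open>x \<in> S\<close> by (simp add: rd_integrand_def g_def rp_def restr_def)
      next
        case False
        then show ?thesis using \<open>x \<in> S\<close> qpos ql
          by (simp add: rd_integrand_def g_def rp_def restr_def)
      qed
    next
      case False
      have q: "qdens m T l t x = 0" using q_eq[OF t x] False by simp
      show ?thesis using False rp0[OF False] by (simp add: rd_integrand_def g_def q)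
    qed
    have nn: "0 \<le> rp x * u t x / Z t powr l" if x: "x \<in> space m" for x
    proof (cases "x \<in> S")
      case True
      then show ?thesis using S_iff[OF t x] rp_nn Zt by simp
    qed (simp add: rp0)
    have int: "integrable m (\<lambda>x. rp x * u t x / Z t powr l)"
      using rpu_int[of t] by simp
    have "(\<integral>\<^sup>+ x. rd_integrand \<alpha> (\<pi> x) (qdens m T l t x) \<partial>m)
        = (\<integral>\<^sup>+ x. ennreal (rp x * u t x / Z t powr l) + g x \<partial>m)"
      by (rule nn_integral_cong) (simp add: pw)
    also have "\<dots> = (\<integral>\<^sup>+ x. ennreal (rp x * u t x / Z t powr l) \<partial>m) + G"
      unfolding G_def by (rule nn_integral_add) simp_all
    also have "(\<integral>\<^sup>+ x. ennreal (rp x * u t x / Z t powr l) \<partial>m) = ennreal (\<integral>x. rp x * u t x / Z t powr l \<partial>m)"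
      by (rule nn_integral_eq_integral[OF int]) (use nn in auto)
    also have "(\<integral>x. rp x * u t x / Z t powr l \<partial>m) = J t"
      unfolding J_def by (simp add: rpu_A)
    finally show ?thesis .
  qed
  have Kpos: "Ip / Iw > 0" using Ippos Iwpos by simp
  have Js: "J \<theta>s = (Ip / Iw) * Z \<theta>s / Z \<theta>s powr l" unfolding J_def As ..
  have Zs: "Z \<theta>s > 0" using Zpos[OF ths_dom] .
  have Zt: "Z \<theta> > 0" using Zpos[OF th] .
  have At: "A \<theta> > 0" using Apos[OF th] .
  define c where "c = A \<theta> / Z \<theta>s"
  have cpos: "c > 0" using At Zs by (simp add: c_def)
  have tg: "c powr p * Z \<theta>s \<le> Z \<theta>" using tang[OF th] by (simp add: c_def)
  have cpow: "(c powr p * Z \<theta>s) powr l = c * Z \<theta>s powr l"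
    using cpos Zs by (simp add: powr_mult powr_powr pa)
  have rd_def2: "renyi_div m \<alpha> \<pi> q = ereal (1 / (\<alpha> - 1)) * eln (\<integral>\<^sup>+ x. rd_integrand \<alpha> (\<pi> x) (q x) \<partial>m)" for q
    using l0 alpha_def by (simp add: renyi_div_def)
  show ?thesis
  proof (cases "l > 0")
    case True
    have h1: "Z \<theta> powr l \<ge> c * Z \<theta>s powr l"
      using powr_mono2[of l "c powr p * Z \<theta>s" "Z \<theta>"] tg cpos Zs True cpow by simp
    have "A \<theta> / Z \<theta> powr l \<le> Z \<theta>s / Z \<theta>s powr l"
      by (rule frac1[OF At Zs _ _ h1[unfolded c_def]]) (use Zs Zt in simp_all)
    then have "J \<theta> \<le> J \<theta>s" unfolding J_def As
      by (rule frac3[OF Kpos])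
    then have "ennreal (J \<theta>) + G \<le> ennreal (J \<theta>s) + G" by (rule enn_add_mono)
    then have "eln (ennreal (J \<theta>) + G) \<le> eln (ennreal (J \<theta>s) + G)" by (rule eln_mono)
    moreover have "1 / (\<alpha> - 1) < 0" using True alpha_def by simp
    ultimately show ?thesis unfolding rd_def2 F_eq[OF th] F_eq[OF ths_dom]
      by (rule ereal_neg_mult_anti[rotated])
  next
    case False
    then have ln: "l < 0" using l0 by simp
    have h1: "Z \<theta> powr l \<le> c * Z \<theta>s powr l"
      using powr_mono2'[of l "c powr p * Z \<theta>s" "Z \<theta>"] tg cpos Zs ln cpow by simp
    have "Z \<theta>s / Z \<theta>s powr l \<le> A \<theta> / Z \<theta> powr l"
      by (rule frac2[OF At Zs _ _ h1[unfolded c_def]]) (use Zs Zt in simp_all)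
    then have "J \<theta>s \<le> J \<theta>" unfolding J_def As
      by (rule frac3[OF Kpos])
    then have "ennreal (J \<theta>s) + G \<le> ennreal (J \<theta>) + G" by (rule enn_add_mono)
    then have "eln (ennreal (J \<theta>s) + G) \<le> eln (ennreal (J \<theta>) + G)" by (rule eln_mono)
    moreover have "1 / (\<alpha> - 1) > 0" using ln alpha_def by simp
    ultimately show ?thesis unfolding rd_def2 F_eq[OF th] F_eq[OF ths_dom]
      by (rule ereal_pos_mult_mono[rotated])
  qed
qed

lemma main_0:
  fixes m :: "'x measure" and T :: "'x \<Rightarrow> 'h::euclidean_space"
    and l \<alpha> :: real and S :: "'x set" and \<pi> :: "'x \<Rightarrow> real" and \<theta>s :: 'h
  assumes T_meas: "T \<in> borel_measurable m"
    and alpha_def: "\<alpha> = 1 - l"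
    and A: "assumptionA m T l \<alpha>"
    and B: "assumptionB m T l \<alpha> S"
    and pi_dens: "is_density m \<pi>"
    and pi_compat: "Q_compatible m T l \<alpha> \<pi>"
    and ths_dom: "\<theta>s \<in> dom_phi m T l"
    and moment: "escort_exp m \<alpha> (qdens m T l \<theta>s) T = escort_exp m \<alpha> (restr \<pi> S) T"
    and l0: "l = 0" and th: "\<theta> \<in> dom_phi m T l"
  shows "renyi_div m \<alpha> \<pi> (qdens m T l \<theta>s) \<le> renyi_div m \<alpha> \<pi> (qdens m T l \<theta>)"
proof -
  note [measurable] = T_meas
  have a1: "\<alpha> = 1" using alpha_def l0 by simp
  have pi_meas[measurable]: "\<pi> \<in> borel_measurable m" and pi_nn: "\<And>x. x \<in> space m \<Longrightarrow> 0 \<le> \<pi> x"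
    and pi_one: "(\<integral>\<^sup>+ x. ennreal (\<pi> x) \<partial>m) = 1"
    using pi_dens by (auto simp: is_density_def)
  have pi_int: "integrable m \<pi>"
    by (rule integrableI_nonneg) (use pi_one pi_nn in auto)
  have pi_I: "(\<integral>x. \<pi> x \<partial>m) = 1"
  proof -
    have "(\<integral>\<^sup>+ x. ennreal (\<pi> x) \<partial>m) = ennreal (\<integral>x. \<pi> x \<partial>m)"
      by (rule nn_integral_eq_integral[OF pi_int]) (use pi_nn in auto)
    moreover have "(\<integral>x. \<pi> x \<partial>m) \<ge> 0" by (rule Bochner_Integration.integral_nonneg) (use pi_nn in auto)
    ultimately show ?thesis using pi_one
      by (metis ennreal_1 ennreal_inj zero_le_one)
  qed
  have suppS: "\<And>t. t \<in> dom_phi m T l \<Longrightarrow> supp m T l t = S" using B by (simp add: assumptionB_def)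
  have S_sp: "S = space m" using suppS[OF ths_dom] l0 by (simp add: supp_def)
  have e_eq: "expc l t T x = exp (t \<bullet> T x)" for t x using l0 by (simp add: expc_def)
  define Z where "Z t = (\<integral>x. expc l t T x \<partial>m)" for t
  have Zpos: "Z t > 0" and Zint: "integrable m (expc l t T)" and Zpf: "partfn m T l t = ennreal (Z t)"
    if "t \<in> dom_phi m T l" for t
    using partfn_facts[OF T_meas A that] by (auto simp: Z_def)
  have q_eq: "qdens m T l t x = exp (t \<bullet> T x) / Z t" if "t \<in> dom_phi m T l" for t x
    using Zpos[OF that] by (simp add: qdens_def Zpf[OF that] e_eq)
  have qpos: "qdens m T l t x > 0" if "t \<in> dom_phi m T l" for t x
    using Zpos[OF that] q_eq[OF that] by simp
  define q where "q = qdens m T l \<theta>s"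
  have cq: "compatible m T l \<alpha> q \<theta>s"
    using B ths_dom by (simp add: assumptionB_def Q_compatible_def q_def)
  have qT_int: "integrable m (\<lambda>x. q x *\<^sub>R T x)"
  proof -
    have i: "integrable m (\<lambda>x. restr q S x powr \<alpha> *\<^sub>R T x)"
      using cq unfolding compatible_def Let_def suppS[OF ths_dom] by auto
    show ?thesis
      by (rule Bochner_Integration.integrable_cong[THEN iffD1, OF refl _ i])
        (use qpos[OF ths_dom] in \<open>simp add: restr_def S_sp a1 q_def less_imp_le\<close>)
  qed
  define M where "M = (\<integral>x. q x *\<^sub>R T x \<partial>m)"
  have q_I: "(\<integral>x. q x \<partial>m) = 1"
    using Zpos[OF ths_dom] by (simp add: q_def q_eq[OF ths_dom] Z_def e_eq)
  have esc_q: "escort_exp m \<alpha> q T = M"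
    unfolding escort_exp_def M_def a1 using qpos[OF ths_dom] q_I by (simp add: q_def less_imp_le)
  have cp: "compatible m T l \<alpha> \<pi> \<theta>s" using pi_compat ths_dom by (simp add: Q_compatible_def)
  have piT_int: "integrable m (\<lambda>x. \<pi> x *\<^sub>R T x)"
  proof -
    have i: "integrable m (\<lambda>x. restr \<pi> S x powr \<alpha> *\<^sub>R T x)"
      using cp unfolding compatible_def Let_def suppS[OF ths_dom] by auto
    show ?thesis
      by (rule Bochner_Integration.integrable_cong[THEN iffD1, OF refl _ i])
        (use pi_nn in \<open>simp add: restr_def S_sp a1\<close>)
  qed
  have esc_p: "escort_exp m \<alpha> (restr \<pi> S) T = (\<integral>x. \<pi> x *\<^sub>R T x \<partial>m)"
  proof -
    have "(\<integral>x. restr \<pi> S x powr \<alpha> \<partial>m) = (\<integral>x. \<pi> x \<partial>m)"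
      by (rule Bochner_Integration.integral_cong) (use pi_nn in \<open>simp_all add: restr_def S_sp a1\<close>)
    moreover have "(\<integral>x. restr \<pi> S x powr \<alpha> *\<^sub>R T x \<partial>m) = (\<integral>x. \<pi> x *\<^sub>R T x \<partial>m)"
      by (rule Bochner_Integration.integral_cong) (use pi_nn in \<open>simp_all add: restr_def S_sp a1\<close>)
    ultimately show ?thesis unfolding escort_exp_def pi_I by simp
  qed
  have Mp: "(\<integral>x. \<pi> x *\<^sub>R T x \<partial>m) = M" using moment esc_q esc_p by (simp add: q_def)
  define h where "h x = \<pi> x * ln (\<pi> x)" for x
  have kl_pw: "\<pi> x * ln (\<pi> x / qdens m T l t x) = h x + (- (t \<bullet> (\<pi> x *\<^sub>R T x)) + ln (Z t) * \<pi> x)"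
    if t: "t \<in> dom_phi m T l" and x: "x \<in> space m" for t x
  proof (cases "\<pi> x = 0")
    case False
    then have px: "\<pi> x > 0" using pi_nn[OF x] by simp
    have "ln (\<pi> x / qdens m T l t x) = ln (\<pi> x) - (t \<bullet> T x - ln (Z t))"
      using px Zpos[OF t] by (simp add: q_eq[OF t] ln_div ln_mult)
    then show ?thesis by (simp add: h_def right_diff_distrib)
  qed (simp add: h_def)
  have d_int: "integrable m (\<lambda>x. - (t \<bullet> (\<pi> x *\<^sub>R T x)) + ln (Z t) * \<pi> x)" for t
    using piT_int pi_int by (intro Bochner_Integration.integrable_add integrable_minus integrable_inner_right integrable_mult_right)
  have d_I: "(\<integral>x. - (t \<bullet> (\<pi> x *\<^sub>R T x)) + ln (Z t) * \<pi> x \<partial>m) = - (t \<bullet> M) + ln (Z t)" for t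
  proof -
    have "(\<integral>x. - (t \<bullet> (\<pi> x *\<^sub>R T x)) + ln (Z t) * \<pi> x \<partial>m)
       = (\<integral>x. - (t \<bullet> (\<pi> x *\<^sub>R T x)) \<partial>m) + (\<integral>x. ln (Z t) * \<pi> x \<partial>m)"
      by (rule Bochner_Integration.integral_add[OF integrable_minus[OF integrable_inner_right[OF piT_int]] integrable_mult_right[OF pi_int]])
    also have "(\<integral>x. - (t \<bullet> (\<pi> x *\<^sub>R T x)) \<partial>m) = - (t \<bullet> M)"
    proof -
      have "(\<integral>x. - (t \<bullet> (\<pi> x *\<^sub>R T x)) \<partial>m) = - (\<integral>x. t \<bullet> (\<pi> x *\<^sub>R T x) \<partial>m)"
        by (rule Bochner_Integration.integral_minus)
      also have "(\<integral>x. t \<bullet> (\<pi> x *\<^sub>R T x) \<partial>m) = t \<bullet> (\<integral>x. \<pi> x *\<^sub>R T x \<partial>m)"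
        by (rule integral_inner_right) (use piT_int in auto)
      finally show ?thesis using Mp by simp
    qed
    also have "(\<integral>x. ln (Z t) * \<pi> x \<partial>m) = ln (Z t)" using pi_I by simp
    finally show ?thesis .
  qed
  have kl_int: "integrable m (\<lambda>x. \<pi> x * ln (\<pi> x / qdens m T l t x)) \<longleftrightarrow> integrable m h"
    if t: "t \<in> dom_phi m T l" for t
  proof -
    have "integrable m (\<lambda>x. \<pi> x * ln (\<pi> x / qdens m T l t x)) \<longleftrightarrow>
          integrable m (\<lambda>x. h x + (- (t \<bullet> (\<pi> x *\<^sub>R T x)) + ln (Z t) * \<pi> x))"
      by (rule Bochner_Integration.integrable_cong) (simp_all add: kl_pw[OF t])
    also have "\<dots> \<longleftrightarrow> integrable m h"
    proof
      assume "integrable m (\<lambda>x. h x + (- (t \<bullet> (\<pi> x *\<^sub>R T x)) + ln (Z t) * \<pi> x))"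
      from Bochner_Integration.integrable_diff[OF this d_int[of t]] show "integrable m h" by simp
    next
      assume "integrable m h"
      then show "integrable m (\<lambda>x. h x + (- (t \<bullet> (\<pi> x *\<^sub>R T x)) + ln (Z t) * \<pi> x))"
        using d_int[of t] by (rule Bochner_Integration.integrable_add)
    qed
    finally show ?thesis .
  qed
  have kl_I: "(\<integral>x. \<pi> x * ln (\<pi> x / qdens m T l t x) \<partial>m) = integral\<^sup>L m h - (t \<bullet> M) + ln (Z t)"
    if t: "t \<in> dom_phi m T l" and hi: "integrable m h" for t
  proof -
    have "(\<integral>x. \<pi> x * ln (\<pi> x / qdens m T l t x) \<partial>m) =
          (\<integral>x. h x + (- (t \<bullet> (\<pi> x *\<^sub>R T x)) + ln (Z t) * \<pi> x) \<partial>m)"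
      by (rule Bochner_Integration.integral_cong) (simp_all add: kl_pw[OF t])
    also have "\<dots> = integral\<^sup>L m h + (\<integral>x. - (t \<bullet> (\<pi> x *\<^sub>R T x)) + ln (Z t) * \<pi> x \<partial>m)"
      by (rule Bochner_Integration.integral_add[OF hi d_int])
    finally show ?thesis unfolding d_I by simp
  qed
  have kl_def2: "renyi_div m \<alpha> \<pi> (qdens m T l t) =
     (if integrable m h then ereal (integral\<^sup>L m h - (t \<bullet> M) + ln (Z t)) else \<infinity>)"
    if t: "t \<in> dom_phi m T l" for t
    using kl_int[OF t] kl_I[OF t] qpos[OF t] by (simp add: renyi_div_def a1 KL_div_def)
  define es where "es x = exp (\<theta>s \<bullet> T x)" for x
  define c where "c = (\<theta> - \<theta>s) \<bullet> M"
  have Zs: "Z \<theta>s > 0" using Zpos[OF ths_dom] .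
  have Zt: "Z \<theta> > 0" using Zpos[OF th] .
  have es_e: "es = expc l \<theta>s T" by (rule ext) (simp add: es_def e_eq)
  have es_int: "integrable m es" using Zint[OF ths_dom] by (simp add: es_e)
  have esT_eq: "es x *\<^sub>R T x = Z \<theta>s *\<^sub>R (q x *\<^sub>R T x)" for x
    using Zs by (simp add: es_def q_def q_eq[OF ths_dom])
  have esT_int: "integrable m (\<lambda>x. es x *\<^sub>R T x)"
    unfolding esT_eq using qT_int by (rule integrable_scaleR_right)
  have esT_I: "(\<integral>x. es x *\<^sub>R T x \<partial>m) = Z \<theta>s *\<^sub>R M"
    unfolding esT_eq M_def by (rule integral_scaleR_right)
  have es_I: "(\<integral>x. es x \<partial>m) = Z \<theta>s" by (simp add: Z_def es_e)
  have pw: "exp c * ((1 - c) * es x + 1 * ((\<theta> - \<theta>s) \<bullet> (es x *\<^sub>R T x))) \<le> expc l \<theta> T x" for x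
  proof -
    define y where "y = (\<theta> - \<theta>s) \<bullet> T x"
    have "1 + (y - c) \<le> exp (y - c)" by (rule exp_ge_add_one_self)
    then have "exp c * (1 + (y - c)) \<le> exp c * exp (y - c)" by simp
    also have "exp c * exp (y - c) = exp y" by (simp add: exp_diff)
    finally have e1: "exp c * (1 + (y - c)) \<le> exp y" .
    have "es x * (exp c * (1 + (y - c))) \<le> es x * exp y"
      by (rule mult_left_mono[OF e1]) (simp add: es_def)
    moreover have "es x * exp y = expc l \<theta> T x"
      by (simp add: es_def y_def e_eq inner_diff_left flip: exp_add)
    moreover have "exp c * ((1 - c) * es x + 1 * ((\<theta> - \<theta>s) \<bullet> (es x *\<^sub>R T x))) = es x * (exp c * (1 + (y - c)))"
      by (simp add: y_def algebra_simps)
    ultimately show ?thesis by linarith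
  qed
  have "(\<integral>x. exp c * ((1 - c) * es x + 1 * ((\<theta> - \<theta>s) \<bullet> (es x *\<^sub>R T x))) \<partial>m) \<le> Z \<theta>"
    unfolding Z_def
    by (rule integral_mono[OF _ Zint[OF th] pw])
      (use es_int esT_int in \<open>intro integrable_mult_right Bochner_Integration.integrable_add integrable_inner_right\<close>)
  also have "(\<integral>x. exp c * ((1 - c) * es x + 1 * ((\<theta> - \<theta>s) \<bullet> (es x *\<^sub>R T x))) \<partial>m)
      = exp c * ((1 - c) * Z \<theta>s + 1 * ((\<theta> - \<theta>s) \<bullet> (Z \<theta>s *\<^sub>R M)))"
    using lin_int[of m "\<lambda>x. (1 - c) * es x" "\<lambda>x. es x *\<^sub>R T x" 1 "\<theta> - \<theta>s"] es_int esT_int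
    by (simp add: es_I esT_I)
  also have "exp c * ((1 - c) * Z \<theta>s + 1 * ((\<theta> - \<theta>s) \<bullet> (Z \<theta>s *\<^sub>R M))) = exp c * Z \<theta>s"
    by (simp add: c_def algebra_simps)
  finally have ez: "exp c * Z \<theta>s \<le> Z \<theta>" .
  have "ln (exp c * Z \<theta>s) \<le> ln (Z \<theta>)"
    using ln_le_cancel_iff[of "exp c * Z \<theta>s" "Z \<theta>"] Zs Zt ez by simp
  then have key: "c + ln (Z \<theta>s) \<le> ln (Z \<theta>)" using Zs by (simp add: ln_mult)
  show ?thesis
    unfolding kl_def2[OF th] kl_def2[OF ths_dom]
    using key by (simp add: c_def inner_diff_left)
qed

theorem proposition7:
  fixes m :: "'x measure" and T :: "'x \<Rightarrow> 'h::euclidean_space"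
    and l \<alpha> :: real and S :: "'x set" and \<pi> :: "'x \<Rightarrow> real" and \<theta>s :: 'h
  assumes T_meas: "T \<in> borel_measurable m"
    and alpha_def: "\<alpha> = 1 - l"
    and A: "assumptionA m T l \<alpha>"
    and B: "assumptionB m T l \<alpha> S"
    and pi_dens: "is_density m \<pi>"
    and pi_compat: "Q_compatible m T l \<alpha> \<pi>"
    and ths_dom: "\<theta>s \<in> dom_phi m T l"
    and moment: "escort_exp m \<alpha> (qdens m T l \<theta>s) T = escort_exp m \<alpha> (restr \<pi> S) T"
  shows "\<forall>\<theta>\<in>dom_phi m T l. renyi_div m \<alpha> \<pi> (qdens m T l \<theta>s) \<le> renyi_div m \<alpha> \<pi> (qdens m T l \<theta>)"
proof
  fix \<theta> assume th: "\<theta> \<in> dom_phi m T l"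
  show "renyi_div m \<alpha> \<pi> (qdens m T l \<theta>s) \<le> renyi_div m \<alpha> \<pi> (qdens m T l \<theta>)"
  proof (cases "l = 0")
    case True
    show ?thesis by (rule main_0[OF T_meas alpha_def A B pi_dens pi_compat ths_dom moment True th])
  next
    case False
    show ?thesis by (rule main_ne0[OF T_meas alpha_def A B pi_dens pi_compat ths_dom moment False th])
  qed
qed

end
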